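(* Let $f:\mathbb{R}^n\to\mathbb{R}\cup\{+\infty\}$ be a polyhedral M-convex function with bounded $\operatorname{dom}_{\mathbb{R}} f$, $y\in\operatorname{dom}_{\mathbb{R}} f$, and $i,j,k\in N$ pairwise distinct. For every $\lambda>0$ with $\hat y:=y+\lambda(\chi_i-\chi_k)\in\operatorname{dom}_{\mathbb{R}} f$, we have $f'_{\mathbb{R}}(\hat y;i,j)\ge f'_{\mathbb{R}}(y;i,j)$. In particular, if $f'_{\mathbb{R}}(y;i,j)>\phi_{\mathbb{R}}(y)$ then $f'_{\mathbb{R}}(\hat y;i,j)>\phi_{\mathbb{R}}(y)$.
   Context: $N=\{1,\dots,n\}$; $\chi_i$ is the $i$-th unit vector. $\operatorname{dom}_{\mathbb{R}} f=\{x\in\mathbb{R}^n:f(x)<+\infty\}$. A polyhedral convex function $f:\mathbb{R}^n\to\mathbb{R}\cup\{+\infty\}$ (epigraph a polyhedron, $\operatorname{dom}_{\mathbb{R}} f\neq\emptyset$) is M-convex if for all $x,y\in\operatorname{dom}_{\mathbb{R}} f$ and every $i$ with $x(i)>y(i)$ there exist $j$ with $x(j)<y(j)$ and $\epsilon_0>0$ such that $f(x)+f(y)\ge f(x-\epsilon(\chi_i-\chi_j))+f(y+\epsilon(\chi_i-\chi_j))$ for all $\epsilon\in[0,\epsilon_0]$. For $x\in\operatorname{dom}_{\mathbb{R}} f$, $f'_{\mathbb{R}}(x;i,j)=\lim_{\alpha\downarrow0}(f(x+\alpha(\chi_i-\chi_j))-f(x))/\alpha$ (possibly $+\infty$), and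 $\phi_{\mathbb{R}}(x)=\min_{i,j\in N}f'_{\mathbb{R}}(x;i,j)$. *)

theory Defs
  imports "HOL-Analysis.Analysis" "HOL-Library.Extended_Real"
begin

text \<open>Vectors in R^n are modelled as real^'n, N = UNIV :: 'n set.
  Functions R^n -> R \<union> {+\<infinity>} are modelled as ereal-valued functions never equal to -\<infinity>.\<close>

definition unitv :: "'n::finite \<Rightarrow> real^'n" ("\<chi>v") where
  "unitv i = axis i 1"

definition domR :: "((real^('n::finite)) \<Rightarrow> ereal) \<Rightarrow> (real^'n) set" where
  "domR f = {x. f x < \<infinity>}"

definition epigraph :: "((real^('n::finite)) \<Rightarrow> ereal) \<Rightarrow> ((real^'n) \<times> real) set" where
  "epigraph f = {(x, t). f x \<le> ereal t}"

definition polyhedral_convex :: "((real^('n::finite)) \<Rightarrow> ereal) \<Rightarrow> bool" where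
  "polyhedral_convex f \<longleftrightarrow>
     (\<forall>x. f x \<noteq> -\<infinity>) \<and> polyhedron (epigraph f) \<and> domR f \<noteq> {}"

definition M_convex :: "((real^('n::finite)) \<Rightarrow> ereal) \<Rightarrow> bool" where
  "M_convex f \<longleftrightarrow> polyhedral_convex f \<and>
     (\<forall>x\<in>domR f. \<forall>y\<in>domR f. \<forall>i. x$i > y$i \<longrightarrow>
        (\<exists>j. x$j < y$j \<and> (\<exists>\<epsilon>0>0. \<forall>\<epsilon>\<in>{0..\<epsilon>0}.
           f x + f y \<ge> f (x - \<epsilon> *\<^sub>R (\<chi>v i - \<chi>v j)) + f (y + \<epsilon> *\<^sub>R (\<chi>v i - \<chi>v j)))))"

definition dirderiv :: "((real^('n::finite)) \<Rightarrow> ereal) \<Rightarrow> real^'n \<Rightarrow> 'n \<Rightarrow> 'n \<Rightarrow> ereal" where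
  "dirderiv f x i j =
     Lim (at_right (0::real)) (\<lambda>\<alpha>. (f (x + \<alpha> *\<^sub>R (\<chi>v i - \<chi>v j)) - f x) / ereal \<alpha>)"

definition phiR :: "((real^('n::finite)) \<Rightarrow> ereal) \<Rightarrow> real^'n \<Rightarrow> ereal" where
  "phiR f x = Min {dirderiv f x i j | i j. True}"

end

theory Submission
  imports Defs
begin

lemma conv3:
  fixes f :: "real^'n::finite \<Rightarrow> ereal"
  assumes cvx: "convex (epigraph f)" and ab: "a < b" and bc: "b < c"
    and fa: "f (p + a *\<^sub>R d) = ereal A" and fc: "f (p + c *\<^sub>R d) = ereal C"
  shows "f (p + b *\<^sub>R d) \<le> ereal (((c-b)*A + (b-a)*C)/(c-a))"
proof -
  define u where "u = (b-a)/(c-a)"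
  have u0: "0 \<le> u" "0 \<le> 1 - u" using ab bc by (auto simp: u_def field_simps)
  have "(p + a *\<^sub>R d, A) \<in> epigraph f" "(p + c *\<^sub>R d, C) \<in> epigraph f"
    using fa fc by (auto simp: epigraph_def)
  then have "(1-u) *\<^sub>R (p + a *\<^sub>R d, A) + u *\<^sub>R (p + c *\<^sub>R d, C) \<in> epigraph f"
    using convexD[OF cvx] u0 by auto
  moreover have "(1-u) *\<^sub>R (p + a *\<^sub>R d, A) + u *\<^sub>R (p + c *\<^sub>R d, C)
      = (p + b *\<^sub>R d, ((c-b)*A + (b-a)*C)/(c-a))"
  proof -
    have "u*(c-a) = b-a" using ab bc by (simp add: u_def)
    then have e1: "(1-u)*a + u*c = b" by (simp add: algebra_simps)
    have "1 - u = (c-b)/(c-a)" using ab bc by (simp add: u_def field_simps)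
    then have e2: "(1-u)*A + u*C = ((c-b)*A + (b-a)*C)/(c-a)"
      by (simp add: u_def add_divide_distrib)
    have "(1-u) *\<^sub>R (p + a *\<^sub>R d) + u *\<^sub>R (p + c *\<^sub>R d) = p + ((1-u)*a + u*c) *\<^sub>R d"
      by (simp add: algebra_simps)
    then show ?thesis using e1 e2 by simp
  qed
  ultimately show ?thesis by (simp add: epigraph_def)
qed

lemma quot_mono:
  fixes f :: "real^'n::finite \<Rightarrow> ereal"
  assumes cvx: "convex (epigraph f)" and ninf: "\<forall>x. f x \<noteq> -\<infinity>"
    and fp: "f p = ereal P" and st: "0 < s" "s < t"
  shows "(f (p + s *\<^sub>R d) - f p) / ereal s \<le> (f (p + t *\<^sub>R d) - f p) / ereal t"
proof (cases "f (p + t *\<^sub>R d) = \<infinity>")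
  case True then show ?thesis using st fp by simp
next
  case False
  then obtain T where fT: "f (p + t *\<^sub>R d) = ereal T" using ninf by (cases "f (p + t *\<^sub>R d)") auto
  have "f (p + s *\<^sub>R d) \<le> ereal (((t-s)*P + (s-0)*T)/(t-0))"
    using conv3[OF cvx, of 0 s t p d P T] st fp fT by simp
  moreover then obtain S where fS: "f (p + s *\<^sub>R d) = ereal S" using ninf
    by (cases "f (p + s *\<^sub>R d)") auto
  ultimately have "S \<le> ((t-s)*P + s*T)/t" by simp
  then have "S * t \<le> (t-s)*P + s*T" using st by (simp add: field_simps)
  then have "(S - P)/s \<le> (T - P)/t" using st by (simp add: field_simps)
  then show ?thesis using fS fT fp st by simp
qed

lemma dd_inf:
  fixes f :: "real^'n::finite \<Rightarrow> ereal"
  assumes cvx: "convex (epigraph f)" and ninf: "\<forall>x. f x \<noteq> -\<infinity>"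
    and fp: "f p = ereal P"
  shows "Lim (at_right (0::real)) (\<lambda>t. (f (p + t *\<^sub>R d) - f p) / ereal t)
     = (INF t\<in>{0<..}. (f (p + t *\<^sub>R d) - f p) / ereal t)"
proof (rule tendsto_Lim)
  show "\<not> trivial_limit (at_right (0::real))" by simp
  define q where "q = (\<lambda>t. (f (p + t *\<^sub>R d) - f p) / ereal t)"
  show "(q \<longlongrightarrow> (INF t\<in>{0<..}. q t)) (at_right 0)"
  proof (rule order_tendstoI)
    fix a assume "a < (INF t\<in>{0<..}. q t)"
    then have "\<And>t. t > 0 \<Longrightarrow> a < q t" by (meson INF_lower greaterThan_iff less_le_trans)
    then show "\<forall>\<^sub>F x in at_right 0. a < q x"
      by (rule eventually_mono[OF eventually_at_right_less]) auto
  next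
    fix a assume "(INF t\<in>{0<..}. q t) < a"
    then obtain t where t: "t > 0" "q t < a" by (auto simp: INF_less_iff)
    have "\<forall>\<^sub>F x in at_right 0. x < t" using t(1) eventually_at_right by fastforce
    then show "\<forall>\<^sub>F x in at_right 0. q x < a"
      using eventually_at_right_less
    proof eventually_elim
      case (elim x)
      then have "q x \<le> q t" unfolding q_def using quot_mono[OF cvx ninf fp] by auto
      then show ?case using t by simp
    qed
  qed
qed

lemma key:
  fixes f :: "real^'n::finite \<Rightarrow> ereal"
  assumes cvx: "convex (epigraph f)" and cl: "closed (epigraph f)" and ninf: "\<forall>x. f x \<noteq> -\<infinity>"
    and fy: "f y = ereal Y" and fh: "f yh = ereal H"
    and clt: "ereal c < (INF t\<in>{0<..}. (f (y + t *\<^sub>R d) - f y) / ereal t)"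
    and exch: "\<And>\<alpha>. \<alpha> > 0 \<Longrightarrow> f (yh + \<alpha> *\<^sub>R d) < \<infinity> \<Longrightarrow> \<exists>\<epsilon>. 0 < \<epsilon> \<and> \<epsilon> \<le> \<alpha> \<and>
          f (yh + (\<alpha>-\<epsilon>) *\<^sub>R d) + f (y + \<epsilon> *\<^sub>R d) \<le> f (yh + \<alpha> *\<^sub>R d) + f y"
    and b: "\<beta> > 0"
  shows "ereal c \<le> (f (yh + \<beta> *\<^sub>R d) - f yh) / ereal \<beta>"
proof (cases "f (yh + \<beta> *\<^sub>R d) = \<infinity>")
  case True then show ?thesis using b fh by simp
next
  case False
  then obtain B where fB: "f (yh + \<beta> *\<^sub>R d) = ereal B" using ninf by (cases "f (yh + \<beta> *\<^sub>R d)") auto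
  have fh0: "f (yh + 0 *\<^sub>R d) = ereal H" using fh by simp
  have step: "(yh + \<alpha> *\<^sub>R d, B - c*(\<beta>-\<alpha>)) \<in> epigraph f" if a: "0<\<alpha>" "\<alpha><\<beta>" for \<alpha>
  proof -
    have "f (yh + \<alpha> *\<^sub>R d) \<le> ereal (((\<beta>-\<alpha>)*H + (\<alpha>-0)*B)/(\<beta>-0))"
      using conv3[OF cvx, of 0 \<alpha> \<beta> yh d H B] a fh0 fB by simp
    then obtain A where fA: "f (yh + \<alpha> *\<^sub>R d) = ereal A" using ninf
      by (cases "f (yh + \<alpha> *\<^sub>R d)") auto
    from exch[OF a(1)] fA obtain \<epsilon> where e: "0 < \<epsilon>" "\<epsilon> \<le> \<alpha>"
      and ineq: "f (yh + (\<alpha>-\<epsilon>) *\<^sub>R d) + f (y + \<epsilon> *\<^sub>R d) \<le> f (yh + \<alpha> *\<^sub>R d) + f y" by auto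
    obtain G where fG: "f (yh + (\<alpha>-\<epsilon>) *\<^sub>R d) = ereal G"
      using ineq fA fy ninf by (cases "f (yh + (\<alpha>-\<epsilon>) *\<^sub>R d)"; cases "f (y + \<epsilon> *\<^sub>R d)") auto
    obtain E where fE: "f (y + \<epsilon> *\<^sub>R d) = ereal E"
      using ineq fA fy ninf by (cases "f (yh + (\<alpha>-\<epsilon>) *\<^sub>R d)"; cases "f (y + \<epsilon> *\<^sub>R d)") auto
    have GE: "G + E \<le> A + Y" using ineq fG fE fA fy by simp
    have "ereal c < (f (y + \<epsilon> *\<^sub>R d) - f y) / ereal \<epsilon>"
      using clt e(1) by (meson INF_lower greaterThan_iff less_le_trans)
    then have "c < (E - Y)/\<epsilon>" using fE fy e by simp
    then have cE: "c * \<epsilon> < E - Y" using e by (simp add: field_simps)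
    have "f (yh + \<alpha> *\<^sub>R d) \<le> ereal (((\<beta>-\<alpha>)*G + (\<alpha>-(\<alpha>-\<epsilon>))*B)/(\<beta>-(\<alpha>-\<epsilon>)))"
      using conv3[OF cvx, of "\<alpha>-\<epsilon>" \<alpha> \<beta> yh d G B] a e fG fB by simp
    then have "A \<le> ((\<beta>-\<alpha>)*G + \<epsilon>*B)/(\<beta>-(\<alpha>-\<epsilon>))" using fA by simp
    then have A1: "A * (\<beta>-\<alpha>+\<epsilon>) \<le> (\<beta>-\<alpha>)*G + \<epsilon>*B" using a e by (simp add: field_simps)
    have "(\<beta>-\<alpha>)*G \<le> (\<beta>-\<alpha>)*(A - c*\<epsilon>)" using GE cE a by (intro mult_left_mono) auto
    then have "\<epsilon> * A \<le> \<epsilon> * (B - c*(\<beta>-\<alpha>))" using A1 by (simp add: algebra_simps)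
    then have "A \<le> B - c*(\<beta>-\<alpha>)" using e by simp
    then show ?thesis using fA by (simp add: epigraph_def)
  qed
  have "(yh + 0 *\<^sub>R d, B - c*(\<beta>-0)) \<in> epigraph f"
  proof (rule Lim_in_closed_set[OF cl])
    show "\<forall>\<^sub>F x in at_right 0. (yh + x *\<^sub>R d, B - c*(\<beta>-x)) \<in> epigraph f"
    proof -
      have "\<forall>\<^sub>F x in at_right 0. x < \<beta>" using b eventually_at_right by fastforce
      then show ?thesis using eventually_at_right_less
        by eventually_elim (auto intro: step)
    qed
    show "at_right (0::real) \<noteq> bot" by simp
    show "((\<lambda>x. (yh + x *\<^sub>R d, B - c*(\<beta>-x))) \<longlongrightarrow> (yh + 0 *\<^sub>R d, B - c*(\<beta>-0))) (at_right 0)"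
      by (intro tendsto_intros)
  qed
  then have "H \<le> B - c*\<beta>" using fh by (simp add: epigraph_def)
  then have "c \<le> (B - H)/\<beta>" using b by (simp add: field_simps)
  then show ?thesis using fB fh b by simp
qed

lemma unitv_nth[simp]: "(\<chi>v a) $ m = (if m = a then 1 else 0)"
  by (simp add: unitv_def axis_def)

theorem mainTheorem15:
  fixes f :: "(real^('n::finite)) \<Rightarrow> ereal" and y :: "real^'n" and i j k :: 'n
  assumes "M_convex f"
    and "bounded (domR f)"
    and "y \<in> domR f"
    and "i \<noteq> j" and "j \<noteq> k" and "i \<noteq> k"
  shows "\<forall>lam>0. y + lam *\<^sub>R (\<chi>v i - \<chi>v k) \<in> domR f \<longrightarrow>
           dirderiv f (y + lam *\<^sub>R (\<chi>v i - \<chi>v k)) i j \<ge> dirderiv f y i j \<and>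
           (dirderiv f y i j > phiR f y \<longrightarrow>
              dirderiv f (y + lam *\<^sub>R (\<chi>v i - \<chi>v k)) i j > phiR f y)"
proof (intro allI impI)
  fix lam :: real
  assume lam: "lam > 0" and yhd: "y + lam *\<^sub>R (\<chi>v i - \<chi>v k) \<in> domR f"
  define d where "d = \<chi>v i - \<chi>v j"
  define yh where "yh = y + lam *\<^sub>R (\<chi>v i - \<chi>v k)"
  have pc: "polyhedral_convex f" and exM: "\<forall>x\<in>domR f. \<forall>y\<in>domR f. \<forall>i. x$i > y$i \<longrightarrow>
        (\<exists>j. x$j < y$j \<and> (\<exists>\<epsilon>0>0. \<forall>\<epsilon>\<in>{0..\<epsilon>0}.
           f x + f y \<ge> f (x - \<epsilon> *\<^sub>R (\<chi>v i - \<chi>v j)) + f (y + \<epsilon> *\<^sub>R (\<chi>v i - \<chi>v j))))"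
    using assms(1) unfolding M_convex_def by auto
  have ninf: "\<forall>x. f x \<noteq> -\<infinity>" and cvx: "convex (epigraph f)" and cl: "closed (epigraph f)"
    using pc polyhedron_imp_convex polyhedron_imp_closed unfolding polyhedral_convex_def by auto
  obtain Y where fy: "f y = ereal Y" using assms(3) ninf unfolding domR_def by (cases "f y") auto
  obtain H where fh: "f yh = ereal H" using yhd ninf unfolding domR_def yh_def by (cases "f (y + lam *\<^sub>R (\<chi>v i - \<chi>v k))") auto
  define Lg where "Lg = (INF t\<in>{0<..}. (f (yh + t *\<^sub>R d) - f yh) / ereal t)"
  define Ly where "Ly = (INF t\<in>{0<..}. (f (y + t *\<^sub>R d) - f y) / ereal t)"
  have DG: "dirderiv f yh i j = Lg" unfolding dirderiv_def Lg_def d_def using dd_inf[OF cvx ninf fh] .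
  have DY: "dirderiv f y i j = Ly" unfolding dirderiv_def Ly_def d_def using dd_inf[OF cvx ninf fy] .
  have exch: "\<exists>\<epsilon>. 0 < \<epsilon> \<and> \<epsilon> \<le> \<alpha> \<and>
          f (yh + (\<alpha>-\<epsilon>) *\<^sub>R d) + f (y + \<epsilon> *\<^sub>R d) \<le> f (yh + \<alpha> *\<^sub>R d) + f y"
    if a: "\<alpha> > 0" "f (yh + \<alpha> *\<^sub>R d) < \<infinity>" for \<alpha>
  proof -
    define x where "x = yh + \<alpha> *\<^sub>R d"
    have xd: "x \<in> domR f" using a unfolding x_def domR_def by simp
    have xc: "x $ m = y $ m + lam * ((\<chi>v i - \<chi>v k) $ m) + \<alpha> * (d $ m)" for m
      unfolding x_def yh_def by simp
    have "x $ j < y $ j" using xc[of j] assms(4,5) a(1) unfolding d_def by simp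
    then obtain j' \<epsilon>0 where j': "y $ j' < x $ j'" and e0: "\<epsilon>0 > 0"
      and ex: "\<forall>\<epsilon>\<in>{0..\<epsilon>0}. f y + f x \<ge> f (y - \<epsilon> *\<^sub>R (\<chi>v j - \<chi>v j')) + f (x + \<epsilon> *\<^sub>R (\<chi>v j - \<chi>v j'))"
      using exM assms(3) xd by blast
    have "j' = i"
    proof (rule ccontr)
      assume "j' \<noteq> i"
      then have "x $ j' \<le> y $ j'" using xc[of j'] lam a(1) unfolding d_def
        by (cases "j' = k"; cases "j' = j") auto
      then show False using j' by simp
    qed
    define \<epsilon> where "\<epsilon> = min \<epsilon>0 \<alpha>"
    have eps: "0 < \<epsilon>" "\<epsilon> \<le> \<alpha>" "\<epsilon> \<in> {0..\<epsilon>0}" using e0 a(1) unfolding \<epsilon>_def by auto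
    have v1: "y - \<epsilon> *\<^sub>R (\<chi>v j - \<chi>v i) = y + \<epsilon> *\<^sub>R d" unfolding d_def by (simp add: algebra_simps)
    have v2: "x + \<epsilon> *\<^sub>R (\<chi>v j - \<chi>v i) = yh + (\<alpha>-\<epsilon>) *\<^sub>R d" unfolding d_def x_def by (simp add: algebra_simps)
    have "f y + f x \<ge> f (y + \<epsilon> *\<^sub>R d) + f (yh + (\<alpha>-\<epsilon>) *\<^sub>R d)"
      using ex eps(3) \<open>j' = i\<close> v1 v2 by metis
    then show ?thesis using eps unfolding x_def by (auto simp: add.commute)
  qed
  have key': "Ly \<le> Lg"
  proof (rule ccontr)
    assume "\<not> Ly \<le> Lg"
    then obtain c where c: "Lg < ereal c" "ereal c < Ly" using ereal_dense2 by (meson not_le)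
    have "ereal c \<le> Lg" unfolding Lg_def
    proof (rule INF_greatest)
      fix t :: real assume "t \<in> {0<..}"
      then show "ereal c \<le> (f (yh + t *\<^sub>R d) - f yh) / ereal t"
        using key[OF cvx cl ninf fy fh, of c d t] c(2) exch unfolding Ly_def by auto
    qed
    then show False using c(1) by simp
  qed
  show "dirderiv f yh i j \<ge> dirderiv f y i j \<and>
           (dirderiv f y i j > phiR f y \<longrightarrow> dirderiv f yh i j > phiR f y)"
    using key' DG DY by auto
qed

end
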